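(* Assume $\beta_\Omega>1$ and fix $\lambda>0$ and $\tau$ with $\frac{1}{\beta_\Omega}<\tau<1$. Then there exists $\varepsilon_0>0$ such that for each $\varepsilon\in(0,\varepsilon_0]$ there is $\delta_1>0$ with the property that for every $0<\delta\le\delta_1$ the function $\psi(x)=\delta(\phi_\Omega(x)+\varepsilon)^\tau$, $x\in\overline{\Omega}$, is a supersolution of (P), i.e. $-\Delta\psi\ge\psi-\psi^p$ in $\Omega$ and $\frac{\partial\psi}{\partial\nu}\ge-\lambda\psi^q$ on $\partial\Omega$.
   Context: $\Omega\subset\mathbb{R}^N$ is a bounded domain with smooth boundary $\partial\Omega$, $\nu$ the unit outer normal, $0<q<1<p$. Problem (P): $-\Delta u=u-u^p$ in $\Omega$, $u\ge0$, $\frac{\partial u}{\partial\nu}=-\lambda u^q$ on $\partial\Omega$. $\beta_\Omega$ is the smallest Dirichlet eigenvalue of $-\Delta$ in $\Omega$ and $\phi_\Omega\in C^{2+\theta}(\overline{\Omega})$ a fixed associated eigenfunction with $\phi_\Omega>0$ in $\Omega$, $\phi_\Omega=0$ on $\partial\Omega$ (so $-\partial\phi_\Omega/\partial\nu$ is bounded between positive constants on $\partial\Omega$). *)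

theory Defs
  imports "HOL-Analysis.Analysis"
begin

definition partial :: "'n::finite \<Rightarrow> (real^'n \<Rightarrow> real) \<Rightarrow> real^'n \<Rightarrow> real" where
  "partial i f x = deriv (\<lambda>t. f (x + t *\<^sub>R axis i 1)) 0"

fun ipartial :: "'n::finite list \<Rightarrow> (real^'n \<Rightarrow> real) \<Rightarrow> real^'n \<Rightarrow> real" where
  "ipartial [] f = f"
| "ipartial (i # is) f = partial i (ipartial is f)"

definition has_partial_at :: "'n::finite \<Rightarrow> (real^'n \<Rightarrow> real) \<Rightarrow> real^'n \<Rightarrow> bool" where
  "has_partial_at i f x \<longleftrightarrow> (\<lambda>t. f (x + t *\<^sub>R axis i 1)) field_differentiable (at 0)"

definition grad :: "(real^'n::finite \<Rightarrow> real) \<Rightarrow> real^'n \<Rightarrow> real^'n" where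
  "grad f x = (\<chi> i. partial i f x)"

definition laplacian :: "(real^'n::finite \<Rightarrow> real) \<Rightarrow> real^'n \<Rightarrow> real" where
  "laplacian f x = (\<Sum>i\<in>UNIV. partial i (partial i f) x)"

definition smooth_everywhere :: "(real^'n::finite \<Rightarrow> real) \<Rightarrow> bool" where
  "smooth_everywhere f \<longleftrightarrow>
     (\<forall>is. continuous_on UNIV (ipartial is f) \<and> (\<forall>i x. has_partial_at i (ipartial is f) x))"

definition C2_on :: "(real^'n::finite) set \<Rightarrow> (real^'n \<Rightarrow> real) \<Rightarrow> bool" where
  "C2_on U f \<longleftrightarrow> continuous_on U f \<and>
     (\<forall>i. \<forall>x\<in>U. has_partial_at i f x) \<and> (\<forall>i. continuous_on U (partial i f)) \<and>
     (\<forall>i j. \<forall>x\<in>U. has_partial_at j (partial i f) x) \<and>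
     (\<forall>i j. continuous_on U (partial j (partial i f)))"

text \<open>C^{2+theta}(closure Omega): C^2 in Omega, continuous on the closure, first derivatives
  extend continuously to the closure, second derivatives uniformly theta-Hoelder on Omega.\<close>
definition C2_theta_closure :: "real \<Rightarrow> (real^'n::finite) set \<Rightarrow> (real^'n \<Rightarrow> real) \<Rightarrow> bool" where
  "C2_theta_closure \<theta> \<Omega> f \<longleftrightarrow> C2_on \<Omega> f \<and> continuous_on (closure \<Omega>) f \<and>
     (\<forall>i. uniformly_continuous_on \<Omega> (partial i f)) \<and>
     (\<forall>i j. \<exists>C. \<forall>x\<in>\<Omega>. \<forall>y\<in>\<Omega>.
        \<bar>partial j (partial i f) x - partial j (partial i f) y\<bar> \<le> C * dist x y powr \<theta>)"

text \<open>Bounded domain with smooth boundary, described by a global smooth defining function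
  rho (Omega = {rho < 0}, grad rho \<noteq> 0 on {rho = 0}); nu is the unit outer normal.\<close>
definition smooth_domain :: "(real^'n::finite) set \<Rightarrow> (real^'n \<Rightarrow> real^'n) \<Rightarrow> bool" where
  "smooth_domain \<Omega> \<nu> \<longleftrightarrow> open \<Omega> \<and> connected \<Omega> \<and> bounded \<Omega> \<and> \<Omega> \<noteq> {} \<and>
     (\<exists>\<rho>. smooth_everywhere \<rho> \<and> \<Omega> = {x. \<rho> x < 0} \<and>
        (\<forall>x. \<rho> x = 0 \<longrightarrow> grad \<rho> x \<noteq> 0) \<and>
        (\<forall>x\<in>frontier \<Omega>. \<nu> x = (1 / norm (grad \<rho> x)) *\<^sub>R grad \<rho> x))"

text \<open>d is the outer normal derivative of f at the boundary point x
  (one-sided derivative along nu x, using only values in the closure).\<close>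
definition has_normal_deriv :: "(real^'n::finite \<Rightarrow> real^'n) \<Rightarrow> (real^'n \<Rightarrow> real) \<Rightarrow> real^'n \<Rightarrow> real \<Rightarrow> bool" where
  "has_normal_deriv \<nu> f x d \<longleftrightarrow>
     ((\<lambda>t. (f x - f (x - t *\<^sub>R \<nu> x)) / t) \<longlongrightarrow> d) (at_right 0)"

definition dirichlet_eigenvalue :: "(real^'n::finite) set \<Rightarrow> real \<Rightarrow> bool" where
  "dirichlet_eigenvalue \<Omega> \<mu> \<longleftrightarrow> (\<exists>u. C2_on \<Omega> u \<and> continuous_on (closure \<Omega>) u \<and>
     (\<exists>x\<in>\<Omega>. u x \<noteq> 0) \<and> (\<forall>x\<in>\<Omega>. - laplacian u x = \<mu> * u x) \<and> (\<forall>x\<in>frontier \<Omega>. u x = 0))"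

definition smallest_dirichlet_eigenvalue :: "(real^'n::finite) set \<Rightarrow> real \<Rightarrow> bool" where
  "smallest_dirichlet_eigenvalue \<Omega> \<beta> \<longleftrightarrow>
     dirichlet_eigenvalue \<Omega> \<beta> \<and> (\<forall>\<mu>. dirichlet_eigenvalue \<Omega> \<mu> \<longrightarrow> \<beta> \<le> \<mu>)"

definition supersolution ::
  "(real^'n::finite) set \<Rightarrow> (real^'n \<Rightarrow> real^'n) \<Rightarrow> real \<Rightarrow> real \<Rightarrow> real \<Rightarrow> (real^'n \<Rightarrow> real) \<Rightarrow> bool" where
  "supersolution \<Omega> \<nu> lam p q \<psi> \<longleftrightarrow>
     C2_on \<Omega> \<psi> \<and> continuous_on (closure \<Omega>) \<psi> \<and>
     (\<forall>x\<in>\<Omega>. - laplacian \<psi> x \<ge> \<psi> x - \<psi> x powr p) \<and>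
     (\<forall>x\<in>frontier \<Omega>. \<exists>d. has_normal_deriv \<nu> \<psi> x d \<and> d \<ge> - lam * \<psi> x powr q)"

end

theory Submission
  imports Defs
begin


lemma deriv_bound_ivl:
  fixes g g' :: "real \<Rightarrow> real"
  assumes "a \<le> b" "\<And>s. a \<le> s \<Longrightarrow> s \<le> b \<Longrightarrow> (g has_real_derivative g' s) (at s)"
    "\<And>s. a \<le> s \<Longrightarrow> s \<le> b \<Longrightarrow> \<bar>g' s\<bar> \<le> B"
  shows "\<bar>g b - g a\<bar> \<le> B * (b - a)"
proof (cases "a = b")
  case True then show ?thesis by simp
next
  case False
  then have "a < b" using assms(1) by simp
  from MVT2[OF this assms(2)] obtain z where z: "a < z" "z < b" "g b - g a = (b - a) * g' z" by blast
  have "\<bar>g b - g a\<bar> = (b - a) * \<bar>g' z\<bar>" using z \<open>a<b\<close> by (simp add: abs_mult)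
  also have "\<dots> \<le> (b - a) * B" using assms(3)[of z] z \<open>a<b\<close> by (intro mult_left_mono) auto
  finally show ?thesis by (simp add: mult.commute)
qed

lemma deriv_bound_sym:
  fixes g g' :: "real \<Rightarrow> real"
  assumes "\<And>s. \<bar>s\<bar> \<le> \<bar>a\<bar> \<Longrightarrow> (g has_real_derivative g' s) (at s)"
    "\<And>s. \<bar>s\<bar> \<le> \<bar>a\<bar> \<Longrightarrow> \<bar>g' s\<bar> \<le> B"
  shows "\<bar>g a - g 0\<bar> \<le> B * \<bar>a\<bar>"
proof (cases "a \<ge> 0")
  case True
  then show ?thesis using deriv_bound_ivl[of 0 a g g' B] assms by auto
next
  case False
  then have "\<bar>g 0 - g a\<bar> \<le> B * (0 - a)" using deriv_bound_ivl[of a 0 g g' B] assms by auto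
  then show ?thesis using False by (simp add: abs_minus_commute)
qed

lemma partial_line_deriv:
  assumes "has_partial_at i f y"
  shows "((\<lambda>t. f (y + t *\<^sub>R axis i 1)) has_real_derivative partial i f y) (at 0)"
  using assms unfolding has_partial_at_def partial_def
  by (simp add: DERIV_deriv_iff_field_differentiable)

lemma partial_line_deriv_shift:
  assumes "has_partial_at i f (y + s *\<^sub>R axis i 1)"
  shows "((\<lambda>t. f (y + t *\<^sub>R axis i 1)) has_real_derivative partial i f (y + s *\<^sub>R axis i 1)) (at s)"
proof -
  have "((\<lambda>t. f ((y + s *\<^sub>R axis i 1) + t *\<^sub>R axis i 1)) has_real_derivative partial i f (y + s *\<^sub>R axis i 1)) (at 0)"
    by (rule partial_line_deriv[OF assms])
  then have "((\<lambda>t. f (y + (t + s) *\<^sub>R axis i 1)) has_real_derivative partial i f (y + s *\<^sub>R axis i 1)) (at 0)"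
    by (simp add: scaleR_add_left add.assoc add.commute add.left_commute)
  then show ?thesis using DERIV_shift[where f="\<lambda>t. f (y + t *\<^sub>R axis i 1)" and x=0 and z=s] by simp
qed



lemma coord_est:
  fixes f :: "real^'n::finite \<Rightarrow> real"
  assumes H: "\<And>y. (\<forall>i. \<bar>y$i - x$i\<bar> \<le> \<bar>h$i\<bar>) \<Longrightarrow> (\<forall>i. has_partial_at i f y \<and> \<bar>partial i f y - partial i f x\<bar> \<le> \<eta>)"
  shows "\<bar>f (x + h) - f x - (\<Sum>i\<in>UNIV. h$i * partial i f x)\<bar> \<le> \<eta> * (\<Sum>i\<in>UNIV. \<bar>h$i\<bar>)"
proof -
  define p where "p S = (\<chi> i. if i \<in> S then x$i + h$i else x$i)" for S
  have gen: "\<bar>f (p S) - f x - (\<Sum>i\<in>S. h$i * partial i f x)\<bar> \<le> \<eta> * (\<Sum>i\<in>S. \<bar>h$i\<bar>)"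
    if "finite S" for S
    using that
  proof (induction S rule: finite_induct)
    case empty
    have "p {} = x" by (simp add: p_def vec_eq_iff)
    then show ?case by simp
  next
    case (insert j S)
    have pins: "p (insert j S) = p S + h$j *\<^sub>R axis j 1"
      using insert(2) by (auto simp: p_def vec_eq_iff axis_def)
    define g where "g t = f (p S + t *\<^sub>R axis j 1) - t * partial j f x" for t
    define g' where "g' t = partial j f (p S + t *\<^sub>R axis j 1) - partial j f x" for t
    have cube: "\<forall>i. \<bar>(p S + t *\<^sub>R axis j 1)$i - x$i\<bar> \<le> \<bar>h$i\<bar>" if "\<bar>t\<bar> \<le> \<bar>h$j\<bar>" for t
      using that insert(2) by (auto simp: p_def axis_def)
    have "\<bar>g (h$j) - g 0\<bar> \<le> \<eta> * \<bar>h$j\<bar>"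
    proof (rule deriv_bound_sym[where g'=g'])
      fix s assume s: "\<bar>s\<bar> \<le> \<bar>h $ j\<bar>"
      have hp: "has_partial_at j f (p S + s *\<^sub>R axis j 1)" using H[OF cube[OF s]] by blast
      have d2: "((\<lambda>t. t * partial j f x) has_real_derivative 1 * partial j f x) (at s)"
        by (rule DERIV_cmult_right) (rule DERIV_ident)
      have "((\<lambda>t. f (p S + t *\<^sub>R axis j 1) - t * partial j f x) has_real_derivative
              partial j f (p S + s *\<^sub>R axis j 1) - 1 * partial j f x) (at s)"
        by (rule DERIV_diff[OF partial_line_deriv_shift[OF hp] d2])
      then show "(g has_real_derivative g' s) (at s)" by (simp add: g_def[abs_def] g'_def)
      show "\<bar>g' s\<bar> \<le> \<eta>" using H[OF cube[OF s]] by (simp add: g'_def)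
    qed
    then have e1: "\<bar>f (p (insert j S)) - f (p S) - h$j * partial j f x\<bar> \<le> \<eta> * \<bar>h$j\<bar>"
      by (simp add: g_def pins)
    have "\<bar>f (p (insert j S)) - f x - (\<Sum>i\<in>insert j S. h$i * partial i f x)\<bar>
        = \<bar>(f (p (insert j S)) - f (p S) - h$j * partial j f x) + (f (p S) - f x - (\<Sum>i\<in>S. h$i * partial i f x))\<bar>"
      using insert(1,2) by simp
    also have "\<dots> \<le> \<eta> * \<bar>h$j\<bar> + \<eta> * (\<Sum>i\<in>S. \<bar>h$i\<bar>)"
      using e1 insert(3) by linarith
    also have "\<dots> = \<eta> * (\<Sum>i\<in>insert j S. \<bar>h$i\<bar>)"
      using insert(1,2) by (simp add: distrib_left)
    finally show ?case .
  qed
  have "p UNIV = x + h" by (simp add: p_def vec_eq_iff)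
  then show ?thesis using gen[of UNIV] by simp
qed



lemma cube_dist:
  fixes x y :: "real^'n::finite"
  assumes "\<forall>i. \<bar>y$i - x$i\<bar> \<le> r"
  shows "dist y x \<le> real CARD('n) * r"
proof -
  have "dist y x = norm (y - x)" by (simp add: dist_norm)
  also have "\<dots> \<le> (\<Sum>i\<in>UNIV. \<bar>(y - x)$i\<bar>)" by (rule norm_le_l1_cart)
  also have "\<dots> \<le> of_nat (card (UNIV::'n set)) * r"
    by (rule sum_bounded_above) (use assms in auto)
  finally show ?thesis by simp
qed

lemma local_est:
  fixes f :: "real^'n::finite \<Rightarrow> real"
  assumes U: "open U" "x \<in> U" and P: "\<forall>i. \<forall>y\<in>U. has_partial_at i f y"
    and C: "\<forall>i. continuous_on U (partial i f)" and e: "\<eta> > 0"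
  shows "\<exists>r>0. \<forall>h. (\<forall>i. \<bar>h$i\<bar> \<le> r) \<longrightarrow>
     \<bar>f (x + h) - f x - (\<Sum>i\<in>UNIV. h$i * partial i f x)\<bar> \<le> \<eta> * (\<Sum>i\<in>UNIV. \<bar>h$i\<bar>)"
proof -
  obtain r0 where r0: "r0 > 0" "ball x r0 \<subseteq> U" using U open_contains_ball by blast
  have "\<forall>i. \<exists>d>0. \<forall>y. dist y x < d \<longrightarrow> dist (partial i f y) (partial i f x) < \<eta>"
  proof
    fix i
    have "continuous (at x) (partial i f)"
      using C U continuous_on_eq_continuous_at by blast
    then show "\<exists>d>0. \<forall>y. dist y x < d \<longrightarrow> dist (partial i f y) (partial i f x) < \<eta>"
      using e unfolding continuous_at_eps_delta by blast
  qed
  then obtain R where R: "\<And>i. R i > 0" "\<And>i y. dist y x < R i \<Longrightarrow> dist (partial i f y) (partial i f x) < \<eta>"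
    by metis
  define m where "m = Min (insert r0 (range R))"
  have fin: "finite (insert r0 (range R))" by simp
  have mpos: "m > 0" unfolding m_def using r0 R(1) fin by (auto simp: Min_gr_iff)
  have mle1: "m \<le> r0" unfolding m_def using fin by (simp add: Min_le)
  have mle2: "m \<le> R i" for i unfolding m_def using fin by (intro Min_le) auto
  note mle = mle1 mle2
  define r where "r = m / (2 * real CARD('n))"
  have rpos: "r > 0" using mpos by (simp add: r_def)
  have Cr: "real CARD('n) * r < m" using mpos by (simp add: r_def)
  show ?thesis
  proof (intro exI[of _ r] conjI allI impI rpos)
    fix h :: "real^'n" assume h: "\<forall>i. \<bar>h$i\<bar> \<le> r"
    show "\<bar>f (x + h) - f x - (\<Sum>i\<in>UNIV. h$i * partial i f x)\<bar> \<le> \<eta> * (\<Sum>i\<in>UNIV. \<bar>h$i\<bar>)"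
    proof (rule coord_est)
      fix y :: "real^'n" assume y: "\<forall>i. \<bar>y$i - x$i\<bar> \<le> \<bar>h$i\<bar>"
      have "\<forall>i. \<bar>y$i - x$i\<bar> \<le> r" using y h by (meson order_trans)
      then have "dist y x \<le> real CARD('n) * r" by (rule cube_dist)
      then have dm: "dist y x < m" using Cr by linarith
      then have "y \<in> U" using r0(2) mle(1) by (auto simp: dist_commute)
      show "\<forall>i. has_partial_at i f y \<and> \<bar>partial i f y - partial i f x\<bar> \<le> \<eta>"
      proof
        fix i
        have "dist y x < R i" using dm mle(2)[of i] by linarith
        then have "dist (partial i f y) (partial i f x) < \<eta>" by (rule R(2))
        then show "has_partial_at i f y \<and> \<bar>partial i f y - partial i f x\<bar> \<le> \<eta>"
          using P \<open>y \<in> U\<close> by (simp add: dist_real_def)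
      qed
    qed
  qed
qed



lemma dir_deriv:
  fixes f :: "real^'n::finite \<Rightarrow> real"
  assumes U: "open U" "y + s *\<^sub>R v \<in> U" and P: "\<forall>i. \<forall>y\<in>U. has_partial_at i f y"
    and C: "\<forall>i. continuous_on U (partial i f)"
  shows "((\<lambda>t. f (y + t *\<^sub>R v)) has_real_derivative (\<Sum>i\<in>UNIV. v$i * partial i f (y + s *\<^sub>R v))) (at s)"
proof -
  define z where "z = y + s *\<^sub>R v"
  define D where "D = (\<Sum>i\<in>UNIV. v$i * partial i f z)"
  define M where "M = (\<Sum>i\<in>UNIV. \<bar>v$i\<bar>)"
  have M0: "M \<ge> 0" unfolding M_def by (simp add: sum_nonneg)
  have vM: "\<bar>v$i\<bar> \<le> M" for i unfolding M_def
    by (rule member_le_sum[of i UNIV "\<lambda>i. \<bar>v$i\<bar>"]) auto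
  have "((\<lambda>t. (f (y + t *\<^sub>R v) - f (y + s *\<^sub>R v)) / (t - s)) \<longlongrightarrow> D) (at s)"
    unfolding LIM_eq
  proof (intro allI impI)
    fix r :: real assume r: "r > 0"
    define \<eta> where "\<eta> = r / (2 * (M + 1))"
    have eta: "\<eta> > 0" using r M0 by (simp add: \<eta>_def)
    have etaM: "\<eta> * M < r" using r M0 unfolding \<eta>_def by (simp add: field_simps add_nonneg_pos)
    obtain \<rho> where rho: "\<rho> > 0" "\<And>h. (\<forall>i. \<bar>h$i\<bar> \<le> \<rho>) \<Longrightarrow>
       \<bar>f (z + h) - f z - (\<Sum>i\<in>UNIV. h$i * partial i f z)\<bar> \<le> \<eta> * (\<Sum>i\<in>UNIV. \<bar>h$i\<bar>)"
      using local_est[OF U(1) U(2)[folded z_def] P C eta] by blast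
    show "\<exists>d>0. \<forall>t. t \<noteq> s \<and> norm (t - s) < d \<longrightarrow>
        norm ((f (y + t *\<^sub>R v) - f (y + s *\<^sub>R v)) / (t - s) - D) < r"
    proof (intro exI[of _ "\<rho> / (M + 1)"] conjI allI impI)
      show "\<rho> / (M + 1) > 0" using rho M0 by simp
      fix t assume t: "t \<noteq> s \<and> norm (t - s) < \<rho> / (M + 1)"
      define h where "h = (t - s) *\<^sub>R v"
      have hi: "\<bar>h$i\<bar> \<le> \<rho>" for i
      proof -
        have "\<bar>h$i\<bar> = \<bar>t - s\<bar> * \<bar>v$i\<bar>" by (simp add: h_def abs_mult)
        also have "\<dots> \<le> \<bar>t - s\<bar> * (M + 1)" using vM[of i] by (intro mult_left_mono) auto
        also have "\<dots> \<le> \<rho>" using t M0 by (simp add: field_simps)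
        finally show ?thesis .
      qed
      have zh: "z + h = y + t *\<^sub>R v" by (simp add: z_def h_def algebra_simps)
      have sumh: "(\<Sum>i\<in>UNIV. h$i * partial i f z) = (t - s) * D"
        by (simp add: h_def D_def sum_distrib_left mult.assoc)
      have sumabs: "(\<Sum>i\<in>UNIV. \<bar>h$i\<bar>) = \<bar>t - s\<bar> * M"
        by (simp add: h_def M_def sum_distrib_left abs_mult)
      have est: "\<bar>f (y + t *\<^sub>R v) - f z - (t - s) * D\<bar> \<le> \<eta> * (\<bar>t - s\<bar> * M)"
        using rho(2)[of h] hi zh sumh sumabs by simp
      have ts: "\<bar>t - s\<bar> > 0" using t by simp
      have "(f (y + t *\<^sub>R v) - f z) / (t - s) - D = (f (y + t *\<^sub>R v) - f z - (t - s) * D) / (t - s)"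
        using ts by (simp add: field_simps)
      then have "\<bar>(f (y + t *\<^sub>R v) - f z) / (t - s) - D\<bar> = \<bar>f (y + t *\<^sub>R v) - f z - (t - s) * D\<bar> / \<bar>t - s\<bar>"
        by simp
      also have "\<dots> \<le> \<eta> * M"
        using est ts by (simp add: divide_le_eq mult.commute mult.left_commute)
      also have "\<dots> < r" by (rule etaM)
      finally show "norm ((f (y + t *\<^sub>R v) - f (y + s *\<^sub>R v)) / (t - s) - D) < r"
        by (simp add: z_def)
    qed
  qed
  then show ?thesis unfolding has_field_derivative_iff D_def z_def .
qed



lemma inward:
  fixes \<Omega> :: "(real^'n::finite) set"
  assumes dom: "smooth_domain \<Omega> \<nu>" and x: "x \<in> frontier \<Omega>"
  shows "norm (\<nu> x) = 1 \<and> (\<exists>t0>0. \<forall>s. 0 < s \<and> s \<le> t0 \<longrightarrow> x - s *\<^sub>R \<nu> x \<in> \<Omega>)"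
proof -
  obtain \<rho> where sm: "smooth_everywhere \<rho>" and Om: "\<Omega> = {x. \<rho> x < 0}"
    and gr: "\<forall>x. \<rho> x = 0 \<longrightarrow> grad \<rho> x \<noteq> 0"
    and nu: "\<forall>x\<in>frontier \<Omega>. \<nu> x = (1 / norm (grad \<rho> x)) *\<^sub>R grad \<rho> x"
    and op: "open \<Omega>"
    using dom unfolding smooth_domain_def by blast
  have cont: "continuous_on UNIV \<rho>" using sm unfolding smooth_everywhere_def
    by (metis ipartial.simps(1))
  have P: "\<forall>i. \<forall>y\<in>UNIV. has_partial_at i \<rho> y" using sm unfolding smooth_everywhere_def
    by (metis ipartial.simps(1))
  have C: "\<forall>i. continuous_on UNIV (partial i \<rho>)" using sm unfolding smooth_everywhere_def
    by (metis ipartial.simps)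
  have "closure \<Omega> \<subseteq> {x. \<rho> x \<le> 0}"
  proof (rule closure_minimal)
    show "\<Omega> \<subseteq> {x. \<rho> x \<le> 0}" using Om by auto
    show "closed {x. \<rho> x \<le> 0}"
      using continuous_closed_vimage[of "{..0}" \<rho>] cont by (auto simp: vimage_def continuous_on_eq_continuous_at)
  qed
  moreover have "x \<in> closure \<Omega>" "x \<notin> \<Omega>" using x op by (auto simp: frontier_def interior_open)
  ultimately have rx: "\<rho> x = 0" using Om by fastforce
  define g where "g = grad \<rho> x"
  define N where "N = norm g"
  have g0: "g \<noteq> 0" using gr rx by (simp add: g_def)
  have Npos: "N > 0" using g0 by (simp add: N_def)
  have nux: "\<nu> x = (1 / N) *\<^sub>R g" using nu x by (simp add: N_def g_def)
  have nun: "norm (\<nu> x) = 1" using Npos by (simp add: nux N_def)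
  have dot: "(\<Sum>i\<in>UNIV. \<nu> x $ i * partial i \<rho> x) = N"
  proof -
    have "(\<Sum>i\<in>UNIV. \<nu> x $ i * partial i \<rho> x) = \<nu> x \<bullet> g"
      by (simp add: inner_vec_def g_def grad_def)
    also have "\<dots> = (1 / N) * (g \<bullet> g)" by (simp add: nux)
    also have "g \<bullet> g = N^2" by (simp add: N_def power2_norm_eq_inner)
    finally show ?thesis using Npos by (simp add: power2_eq_square)
  qed
  define M where "M = (\<Sum>i\<in>UNIV. \<bar>\<nu> x $ i\<bar>)"
  have M0: "M \<ge> 0" unfolding M_def by (simp add: sum_nonneg)
  have vM: "\<bar>\<nu> x $ i\<bar> \<le> M" for i unfolding M_def
    by (rule member_le_sum[of i UNIV "\<lambda>i. \<bar>\<nu> x $ i\<bar>"]) auto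
  define \<eta> where "\<eta> = N / (2 * (M + 1))"
  have eta: "\<eta> > 0" using Npos M0 by (simp add: \<eta>_def)
  have etaM: "\<eta> * M < N" using Npos M0 unfolding \<eta>_def by (simp add: field_simps add_nonneg_pos)
  obtain r where r: "r > 0" "\<And>h. (\<forall>i. \<bar>h$i\<bar> \<le> r) \<Longrightarrow>
       \<bar>\<rho> (x + h) - \<rho> x - (\<Sum>i\<in>UNIV. h$i * partial i \<rho> x)\<bar> \<le> \<eta> * (\<Sum>i\<in>UNIV. \<bar>h$i\<bar>)"
    using local_est[OF open_UNIV UNIV_I P C eta] by blast
  have "\<forall>s. 0 < s \<and> s \<le> r / (M + 1) \<longrightarrow> x - s *\<^sub>R \<nu> x \<in> \<Omega>"
  proof (intro allI impI)
    fix s assume s: "0 < s \<and> s \<le> r / (M + 1)"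
    define h where "h = (- s) *\<^sub>R \<nu> x"
    have hi: "\<bar>h$i\<bar> \<le> r" for i
    proof -
      have "\<bar>h$i\<bar> = s * \<bar>\<nu> x $ i\<bar>" using s by (simp add: h_def abs_mult)
      also have "\<dots> \<le> s * (M + 1)" using vM[of i] s by (intro mult_left_mono) auto
      also have "\<dots> \<le> r" using s M0 by (simp add: field_simps)
      finally show ?thesis .
    qed
    have sumh: "(\<Sum>i\<in>UNIV. h$i * partial i \<rho> x) = - s * N"
      by (simp add: h_def dot[symmetric] sum_distrib_left mult.assoc)
    have sumabs: "(\<Sum>i\<in>UNIV. \<bar>h$i\<bar>) = s * M"
      using s by (simp add: h_def M_def sum_distrib_left abs_mult)
    have "\<rho> (x + h) \<le> - s * N + \<eta> * (s * M)"
      using r(2)[of h] hi sumh sumabs rx by simp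
    also have "\<dots> < 0"
    proof -
      have "\<eta> * (s * M) = s * (\<eta> * M)" by simp
      also have "\<dots> < s * N" using etaM s by simp
      finally show ?thesis by simp
    qed
    finally show "x - s *\<^sub>R \<nu> x \<in> \<Omega>" using Om by (simp add: h_def)
  qed
  moreover have "r / (M + 1) > 0" using r M0 by simp
  ultimately show ?thesis using nun by blast
qed



lemma vanish_contra:
  fixes \<Omega> :: "(real^'n::finite) set"
  assumes dom: "smooth_domain \<Omega> \<nu>" and x: "x \<in> frontier \<Omega>"
    and P: "\<forall>i. \<forall>y\<in>\<Omega>. has_partial_at i \<phi> y" and C: "\<forall>i. continuous_on \<Omega> (partial i \<phi>)"
    and cc: "continuous_on (closure \<Omega>) \<phi>"
    and bdry: "\<forall>x\<in>frontier \<Omega>. \<phi> x = 0"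
    and c1: "c1 > 0" and nd: "has_normal_deriv \<nu> \<phi> x d" and dle: "c1 \<le> - d"
    and van: "\<forall>\<eta>>0. \<exists>r>0. \<forall>y\<in>\<Omega>. dist y x < r \<longrightarrow> (\<forall>i. \<bar>partial i \<phi> y\<bar> \<le> \<eta>)"
  shows False
proof -
  have op: "open \<Omega>" using dom by (simp add: smooth_domain_def)
  obtain t0 where nun: "norm (\<nu> x) = 1" and t0: "t0 > 0" "\<And>s. 0 < s \<Longrightarrow> s \<le> t0 \<Longrightarrow> x - s *\<^sub>R \<nu> x \<in> \<Omega>"
    using inward[OF dom x] by blast
  have phx: "\<phi> x = 0" using bdry x by blast
  have xcl: "x \<in> closure \<Omega>" using x by (simp add: frontier_def)
  define M where "M = (\<Sum>i\<in>UNIV. \<bar>\<nu> x $ i\<bar>)"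
  have M0: "M \<ge> 0" unfolding M_def by (simp add: sum_nonneg)
  define \<eta> where "\<eta> = c1 / (2 * (M + 1))"
  have eta: "\<eta> > 0" using c1 M0 by (simp add: \<eta>_def)
  have etaM: "\<eta> * M < c1" using c1 M0 unfolding \<eta>_def by (simp add: field_simps add_nonneg_pos)
  obtain r where r: "r > 0" "\<And>y i. y \<in> \<Omega> \<Longrightarrow> dist y x < r \<Longrightarrow> \<bar>partial i \<phi> y\<bar> \<le> \<eta>"
    using van eta by blast
  define T where "T = min t0 (r / 2)"
  have T: "T > 0" using t0 r by (simp add: T_def)
  have dist_s: "dist (x - s *\<^sub>R \<nu> x) x = s" if "s \<ge> 0" for s
    using that nun by (simp add: dist_norm)
  have bound: "\<bar>\<phi> (x - t *\<^sub>R \<nu> x)\<bar> \<le> \<eta> * M * t" if t: "0 < t" "t \<le> T" for t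
  proof (rule field_le_epsilon)
    fix e :: real assume e: "e > 0"
    obtain r' where r': "r' > 0" "\<And>y. y \<in> closure \<Omega> \<Longrightarrow> dist y x < r' \<Longrightarrow> dist (\<phi> y) (\<phi> x) < e"
      using cc xcl e unfolding continuous_on_iff by blast
    define s0 where "s0 = min (t / 2) (r' / 2)"
    have s0: "0 < s0" "s0 \<le> t" using t r' by (auto simp: s0_def)
    have ins: "x - s *\<^sub>R \<nu> x \<in> \<Omega>" if "s0 \<le> s" "s \<le> t" for s
      using t0(2)[of s] that s0 t T_def by auto
    have "x - s0 *\<^sub>R \<nu> x \<in> closure \<Omega>" using ins[of s0] s0 closure_subset by blast
    moreover have "dist (x - s0 *\<^sub>R \<nu> x) x < r'" using dist_s[of s0] s0 r' nun by (simp add: s0_def)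
    ultimately have "\<bar>\<phi> (x - s0 *\<^sub>R \<nu> x)\<bar> < e"
      using r'(2)[of "x - s0 *\<^sub>R \<nu> x"] phx by (simp add: dist_real_def)
    moreover
    have "\<bar>\<phi> (x + t *\<^sub>R (- \<nu> x)) - \<phi> (x + s0 *\<^sub>R (- \<nu> x))\<bar> \<le> (\<eta> * M) * (t - s0)"
    proof (rule deriv_bound_ivl[where g' = "\<lambda>s. \<Sum>i\<in>UNIV. (- \<nu> x)$i * partial i \<phi> (x + s *\<^sub>R (- \<nu> x))"])
      show "s0 \<le> t" by (rule s0(2))
      fix s assume s: "s0 \<le> s" "s \<le> t"
      have inO: "x + s *\<^sub>R (- \<nu> x) \<in> \<Omega>" using ins[OF s] by simp
      show "((\<lambda>s. \<phi> (x + s *\<^sub>R - \<nu> x)) has_real_derivative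
          (\<Sum>i\<in>UNIV. (- \<nu> x)$i * partial i \<phi> (x + s *\<^sub>R (- \<nu> x)))) (at s)"
        by (rule dir_deriv[OF op inO P C])
      have ds: "dist (x + s *\<^sub>R (- \<nu> x)) x < r"
        using dist_s[of s] s s0 t T_def r by auto
      have "\<bar>\<Sum>i\<in>UNIV. (- \<nu> x)$i * partial i \<phi> (x + s *\<^sub>R (- \<nu> x))\<bar>
          \<le> (\<Sum>i\<in>UNIV. \<bar>\<nu> x $ i\<bar> * \<eta>)"
        using r(2)[OF inO ds]
        by (intro order_trans[OF sum_abs]) (auto simp: abs_mult intro!: sum_mono mult_left_mono)
      also have "\<dots> = \<eta> * M" by (simp add: M_def sum_distrib_left mult.commute)
      finally show "\<bar>\<Sum>i\<in>UNIV. (- \<nu> x)$i * partial i \<phi> (x + s *\<^sub>R (- \<nu> x))\<bar> \<le> \<eta> * M" .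
    qed
    moreover have "(\<eta> * M) * (t - s0) \<le> \<eta> * M * t" using s0 eta M0 by (simp add: mult_left_mono)
    ultimately show "\<bar>\<phi> (x - t *\<^sub>R \<nu> x)\<bar> \<le> \<eta> * M * t + e" by simp
  qed
  have lim: "((\<lambda>t. (\<phi> x - \<phi> (x - t *\<^sub>R \<nu> x)) / t) \<longlongrightarrow> d) (at_right 0)"
    using nd unfolding has_normal_deriv_def .
  have ev: "eventually (\<lambda>t. \<bar>(\<phi> x - \<phi> (x - t *\<^sub>R \<nu> x)) / t\<bar> \<le> \<eta> * M) (at_right 0)"
  proof (rule eventually_at_rightI[of 0 T])
    fix t assume "t \<in> {0<..<T}"
    then have t: "0 < t" "t \<le> T" by auto
    have "\<bar>(\<phi> x - \<phi> (x - t *\<^sub>R \<nu> x)) / t\<bar> = \<bar>\<phi> (x - t *\<^sub>R \<nu> x)\<bar> / t"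
      using t phx by simp
    also have "\<dots> \<le> \<eta> * M" using bound[OF t] t by (simp add: divide_le_eq)
    finally show "\<bar>(\<phi> x - \<phi> (x - t *\<^sub>R \<nu> x)) / t\<bar> \<le> \<eta> * M" .
  qed (rule T)
  have "\<bar>d\<bar> \<le> \<eta> * M"
    by (rule tendsto_le[OF trivial_limit_at_right_real tendsto_const tendsto_rabs[OF lim] ev])
  then show False using etaM dle by linarith
qed



lemma grad_lower:
  fixes \<Omega> :: "(real^'n::finite) set"
  assumes dom: "smooth_domain \<Omega> \<nu>"
    and P: "\<forall>i. \<forall>y\<in>\<Omega>. has_partial_at i \<phi> y" and C: "\<forall>i. continuous_on \<Omega> (partial i \<phi>)"
    and cc: "continuous_on (closure \<Omega>) \<phi>"
    and uc: "\<forall>i. uniformly_continuous_on \<Omega> (partial i \<phi>)"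
    and pos: "\<forall>x\<in>\<Omega>. \<phi> x > 0"
    and bdry: "\<forall>x\<in>frontier \<Omega>. \<phi> x = 0"
    and normal: "\<exists>c1 c2. 0 < c1 \<and> c1 \<le> c2 \<and>
        (\<forall>x\<in>frontier \<Omega>. \<exists>d. has_normal_deriv \<nu> \<phi> x d \<and> c1 \<le> - d \<and> - d \<le> c2)"
  shows "\<exists>\<eta>0>0. \<exists>c>0. \<forall>y\<in>\<Omega>. \<phi> y < \<eta>0 \<longrightarrow> c \<le> (\<Sum>i\<in>UNIV. (partial i \<phi> y)^2)"
proof (rule ccontr)
  assume H: "\<not> ?thesis"
  define S where "S y = (\<Sum>i\<in>UNIV. (partial i \<phi> y)^2)" for y
  have "\<forall>k::nat. \<exists>y\<in>\<Omega>. \<phi> y < inverse (real (Suc k)) \<and> S y < inverse (real (Suc k))"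
  proof
    fix k :: nat
    have "inverse (real (Suc k)) > 0" by simp
    then show "\<exists>y\<in>\<Omega>. \<phi> y < inverse (real (Suc k)) \<and> S y < inverse (real (Suc k))"
      using H unfolding S_def by (meson not_le)
  qed
  then obtain Y where Y: "\<And>k. Y k \<in> \<Omega>" "\<And>k. \<phi> (Y k) < inverse (real (Suc k))"
    "\<And>k. S (Y k) < inverse (real (Suc k))" by metis
  have bnd: "bounded \<Omega>" using dom by (simp add: smooth_domain_def)
  have op: "open \<Omega>" using dom by (simp add: smooth_domain_def)
  have "seq_compact (closure \<Omega>)" using bnd by (simp add: compact_imp_seq_compact)
  moreover have "\<forall>k. Y k \<in> closure \<Omega>" using Y(1) closure_subset by blast
  ultimately obtain x \<sigma> where x: "x \<in> closure \<Omega>" "strict_mono \<sigma>" "(Y \<circ> \<sigma>) \<longlonglongrightarrow> x"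
    unfolding seq_compact_def by metis
  have sig: "k \<le> \<sigma> k" for k by (rule seq_suble[OF x(2)])
  have invle: "inverse (real (Suc (\<sigma> k))) \<le> inverse (real (Suc k))" for k
    using sig[of k] by (simp add: le_imp_inverse_le)
  have lim0: "(\<lambda>k. inverse (real (Suc k))) \<longlonglongrightarrow> 0" by (rule LIMSEQ_inverse_real_of_nat)
  have "(\<lambda>k. \<phi> ((Y \<circ> \<sigma>) k)) \<longlonglongrightarrow> \<phi> x"
    by (rule continuous_on_tendsto_compose[OF cc x(3) x(1)]) (use Y(1) closure_subset in \<open>auto intro!: always_eventually\<close>)
  moreover have "(\<lambda>k. \<phi> ((Y \<circ> \<sigma>) k)) \<longlonglongrightarrow> 0"
  proof (rule tendsto_sandwich[OF _ _ tendsto_const lim0])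
    show "\<forall>\<^sub>F k in sequentially. 0 \<le> \<phi> ((Y \<circ> \<sigma>) k)" using Y(1) pos by (auto intro!: always_eventually less_imp_le)
    show "\<forall>\<^sub>F k in sequentially. \<phi> ((Y \<circ> \<sigma>) k) \<le> inverse (real (Suc k))"
    proof (intro always_eventually allI less_imp_le)
      fix k show "\<phi> ((Y \<circ> \<sigma>) k) < inverse (real (Suc k))"
        using order.strict_trans2[OF Y(2)[of "\<sigma> k"] invle[of k]] by simp
    qed
  qed
  ultimately have phx: "\<phi> x = 0" using LIMSEQ_unique by blast
  have xO: "x \<notin> \<Omega>" using pos phx by force
  have xf: "x \<in> frontier \<Omega>" using x(1) xO op by (simp add: frontier_def interior_open)
  have van: "\<forall>\<eta>>0. \<exists>r>0. \<forall>y\<in>\<Omega>. dist y x < r \<longrightarrow> (\<forall>i. \<bar>partial i \<phi> y\<bar> \<le> \<eta>)"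
  proof (intro allI impI)
    fix \<eta> :: real assume eta: "\<eta> > 0"
    have "\<forall>i. \<exists>d>0. \<forall>y\<in>\<Omega>. \<forall>y'\<in>\<Omega>. dist y' y < d \<longrightarrow> dist (partial i \<phi> y') (partial i \<phi> y) < \<eta> / 2"
      using uc eta unfolding uniformly_continuous_on_def by (metis half_gt_zero)
    then obtain R where R: "\<And>i. R i > 0"
      "\<And>i y y'. y \<in> \<Omega> \<Longrightarrow> y' \<in> \<Omega> \<Longrightarrow> dist y' y < R i \<Longrightarrow> dist (partial i \<phi> y') (partial i \<phi> y) < \<eta> / 2"
      by metis
    define m where "m = Min (range R)"
    have mpos: "m > 0" unfolding m_def using R(1) by (simp add: Min_gr_iff)
    have mle: "m \<le> R i" for i unfolding m_def by (intro Min_le) auto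
    have e1: "eventually (\<lambda>k. dist ((Y \<circ> \<sigma>) k) x < m / 2) sequentially"
      using x(3) mpos unfolding tendsto_iff by (meson half_gt_zero)
    have e2: "eventually (\<lambda>k. inverse (real (Suc k)) < (\<eta>/2)^2) sequentially"
    proof -
      have "(\<eta>/2)^2 > 0" using eta by simp
      then have "eventually (\<lambda>k. dist (inverse (real (Suc k))) 0 < (\<eta>/2)^2) sequentially"
        using lim0 unfolding tendsto_iff by blast
      then show ?thesis by (simp add: dist_real_def)
    qed
    obtain k where k1: "dist ((Y \<circ> \<sigma>) k) x < m / 2" and k2: "inverse (real (Suc k)) < (\<eta>/2)^2"
      using eventually_happens[OF eventually_conj[OF e1 e2]] by auto
    define z where "z = Y (\<sigma> k)"
    have zO: "z \<in> \<Omega>" using Y(1) by (simp add: z_def)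
    have Sz: "S z < (\<eta>/2)^2" using order.strict_trans2[OF Y(3)[of "\<sigma> k"] invle[of k]] k2 unfolding z_def by linarith
    have pz: "\<bar>partial i \<phi> z\<bar> < \<eta> / 2" for i
    proof -
      have "(partial i \<phi> z)^2 \<le> S z" unfolding S_def
        by (rule member_le_sum[of i UNIV "\<lambda>i. (partial i \<phi> z)^2"]) auto
      then have "\<bar>partial i \<phi> z\<bar>^2 < (\<eta>/2)^2" using Sz by simp
      then show ?thesis by (rule power_less_imp_less_base) (use eta in simp)
    qed
    show "\<exists>r>0. \<forall>y\<in>\<Omega>. dist y x < r \<longrightarrow> (\<forall>i. \<bar>partial i \<phi> y\<bar> \<le> \<eta>)"
    proof (intro exI[of _ "m/2"] conjI ballI impI allI)
      show "m / 2 > 0" using mpos by simp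
      fix y i assume y: "y \<in> \<Omega>" "dist y x < m / 2"
      have "dist y z < m" using y(2) k1 dist_triangle[of y z x] by (simp add: z_def dist_commute)
      then have "dist (partial i \<phi> y) (partial i \<phi> z) < \<eta> / 2"
        using R(2)[OF zO y(1)] mle[of i] by simp
      then show "\<bar>partial i \<phi> y\<bar> \<le> \<eta>" using pz[of i] by (simp add: dist_real_def) (smt (verit))
    qed
  qed
  obtain c1 d where c1: "c1 > 0" and nd: "has_normal_deriv \<nu> \<phi> x d" and dle: "c1 \<le> - d"
    using normal xf by blast
  show False by (rule vanish_contra[OF dom xf P C cc bdry c1 nd dle van])
qed



lemma partial_comp:
  assumes "has_partial_at i f y" "(G has_real_derivative G') (at (f y))"
  shows "has_partial_at i (\<lambda>z. G (f z)) y \<and> partial i (\<lambda>z. G (f z)) y = G' * partial i f y"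
proof -
  have d1: "((\<lambda>t. f (y + t *\<^sub>R axis i 1)) has_real_derivative partial i f y) (at 0)"
    by (rule partial_line_deriv[OF assms(1)])
  have "(G has_real_derivative G') (at ((\<lambda>t. f (y + t *\<^sub>R axis i 1)) 0))" using assms(2) by simp
  from DERIV_chain2[OF this d1]
  have d: "((\<lambda>t. G (f (y + t *\<^sub>R axis i 1))) has_real_derivative G' * partial i f y) (at 0)" .
  then show ?thesis unfolding has_partial_at_def partial_def
    using DERIV_imp_deriv field_differentiable_def by blast
qed

lemma partial_mult:
  assumes "has_partial_at i f y" "has_partial_at i g y"
  shows "has_partial_at i (\<lambda>z. f z * g z) y \<and> partial i (\<lambda>z. f z * g z) y = partial i f y * g y + f y * partial i g y"
proof -
  have "((\<lambda>t. f (y + t *\<^sub>R axis i 1) * g (y + t *\<^sub>R axis i 1)) has_real_derivative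
      partial i f y * g (y + 0 *\<^sub>R axis i 1) + partial i g y * f (y + 0 *\<^sub>R axis i 1)) (at 0)"
    by (rule DERIV_mult[OF partial_line_deriv[OF assms(1)] partial_line_deriv[OF assms(2)]])
  then have d: "((\<lambda>t. f (y + t *\<^sub>R axis i 1) * g (y + t *\<^sub>R axis i 1)) has_real_derivative
      partial i f y * g y + f y * partial i g y) (at 0)" by (simp add: mult.commute)
  then show ?thesis unfolding has_partial_at_def partial_def
    using DERIV_imp_deriv field_differentiable_def by blast
qed

lemma partial_local:
  fixes f g :: "real^'n::finite \<Rightarrow> real"
  assumes "open U" "y \<in> U" "\<And>z. z \<in> U \<Longrightarrow> f z = g z"
  shows "(has_partial_at i f y \<longleftrightarrow> has_partial_at i g y) \<and> partial i f y = partial i g y"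
proof -
  obtain r where r: "r > 0" "ball y r \<subseteq> U" using assms(1,2) open_contains_ball by blast
  have ev: "eventually (\<lambda>t. f (y + t *\<^sub>R axis i 1) = g (y + t *\<^sub>R axis i 1)) (nhds 0)"
  proof -
    have "eventually (\<lambda>t::real. t \<in> ball 0 r) (nhds 0)" using r(1) by (intro eventually_nhds_in_open) auto
    then show ?thesis
    proof (rule eventually_mono)
      fix t :: real assume "t \<in> ball 0 r"
      then have "y + t *\<^sub>R axis i 1 \<in> ball y r" by (simp add: dist_norm)
      then show "f (y + t *\<^sub>R axis i 1) = g (y + t *\<^sub>R axis i 1)" using r(2) assms(3) by blast
    qed
  qed
  have "partial i f y = partial i g y" unfolding partial_def by (rule deriv_cong_ev[OF ev refl])
  moreover have "has_partial_at i f y \<longleftrightarrow> has_partial_at i g y"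
    unfolding has_partial_at_def field_differentiable_def
    using DERIV_cong_ev[OF refl ev refl] by simp
  ultimately show ?thesis by blast
qed



lemma deriv_shift_powr:
  fixes s0 e a :: real
  assumes "s0 + e > 0"
  shows "((\<lambda>s. (s + e) powr a) has_real_derivative a * (s0 + e) powr (a - 1)) (at s0)"
proof -
  have "((\<lambda>s. s + e) has_real_derivative 1) (at s0)" by (intro derivative_eq_intros) auto
  from DERIV_chain2[OF has_real_derivative_powr[OF assms] this] show ?thesis by simp
qed

lemma psi_partials:
  fixes \<Omega> :: "(real^'n::finite) set" and \<phi> :: "real^'n \<Rightarrow> real"
  assumes op: "open \<Omega>" and P: "\<forall>i. \<forall>y\<in>\<Omega>. has_partial_at i \<phi> y"
    and PP: "\<forall>i j. \<forall>y\<in>\<Omega>. has_partial_at j (partial i \<phi>) y"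
    and pos: "\<forall>y\<in>\<Omega>. \<phi> y + e > 0" and y: "y \<in> \<Omega>"
  shows "has_partial_at i (\<lambda>x. d * (\<phi> x + e) powr t) y \<and>
         partial i (\<lambda>x. d * (\<phi> x + e) powr t) y = d * t * ((\<phi> y + e) powr (t - 1) * partial i \<phi> y)"
    and "has_partial_at j (partial i (\<lambda>x. d * (\<phi> x + e) powr t)) y \<and>
         partial j (partial i (\<lambda>x. d * (\<phi> x + e) powr t)) y =
           d * t * ((t - 1) * (\<phi> y + e) powr (t - 2) * partial j \<phi> y * partial i \<phi> y
                    + (\<phi> y + e) powr (t - 1) * partial j (partial i \<phi>) y)"
proof -
  have first: "has_partial_at i (\<lambda>x. d * (\<phi> x + e) powr t) z \<and>
         partial i (\<lambda>x. d * (\<phi> x + e) powr t) z = d * t * ((\<phi> z + e) powr (t - 1) * partial i \<phi> z)"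
    if z: "z \<in> \<Omega>" for z i
  proof -
    have "((\<lambda>s. d * (s + e) powr t) has_real_derivative d * (t * (\<phi> z + e) powr (t - 1))) (at (\<phi> z))"
      using deriv_shift_powr[of "\<phi> z" e t] pos z by (intro DERIV_cmult) auto
    from partial_comp[OF P[rule_format, OF z] this] show ?thesis by (simp add: mult_ac)
  qed
  then show "has_partial_at i (\<lambda>x. d * (\<phi> x + e) powr t) y \<and>
         partial i (\<lambda>x. d * (\<phi> x + e) powr t) y = d * t * ((\<phi> y + e) powr (t - 1) * partial i \<phi> y)"
    using y by blast
  define F where "F z = d * t * ((\<phi> z + e) powr (t - 1) * partial i \<phi> z)" for z
  have loc: "(has_partial_at j (partial i (\<lambda>x. d * (\<phi> x + e) powr t)) y \<longleftrightarrow> has_partial_at j F y) \<and>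
      partial j (partial i (\<lambda>x. d * (\<phi> x + e) powr t)) y = partial j F y"
    by (rule partial_local[OF op y]) (use first in \<open>simp add: F_def\<close>)
  have h1: "has_partial_at j (\<lambda>z. (\<phi> z + e) powr (t - 1)) y \<and>
      partial j (\<lambda>z. (\<phi> z + e) powr (t - 1)) y = (t - 1) * (\<phi> y + e) powr (t - 1 - 1) * partial j \<phi> y"
    using partial_comp[OF P[rule_format, OF y] deriv_shift_powr[of "\<phi> y" e "t - 1"]] pos y by simp
  have h2: "has_partial_at j (\<lambda>z. (\<phi> z + e) powr (t - 1) * partial i \<phi> z) y \<and>
      partial j (\<lambda>z. (\<phi> z + e) powr (t - 1) * partial i \<phi> z) y =
        (t - 1) * (\<phi> y + e) powr (t - 1 - 1) * partial j \<phi> y * partial i \<phi> y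
        + (\<phi> y + e) powr (t - 1) * partial j (partial i \<phi>) y"
    using partial_mult[OF h1[THEN conjunct1] PP[rule_format, OF y]] h1 by simp
  have dc: "((\<lambda>s. d * t * s) has_real_derivative d * t) (at s)" for s
    using DERIV_cmult[OF DERIV_ident, of "d * t" s] by simp
  have h3: "has_partial_at j F y \<and> partial j F y = d * t * ((t - 1) * (\<phi> y + e) powr (t - 1 - 1) * partial j \<phi> y * partial i \<phi> y
        + (\<phi> y + e) powr (t - 1) * partial j (partial i \<phi>) y)"
    using partial_comp[OF h2[THEN conjunct1] dc] h2 unfolding F_def by simp
  have "t - 1 - 1 = t - 2" by simp
  then show "has_partial_at j (partial i (\<lambda>x. d * (\<phi> x + e) powr t)) y \<and>
         partial j (partial i (\<lambda>x. d * (\<phi> x + e) powr t)) y =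
           d * t * ((t - 1) * (\<phi> y + e) powr (t - 2) * partial j \<phi> y * partial i \<phi> y
                    + (\<phi> y + e) powr (t - 1) * partial j (partial i \<phi>) y)"
    using loc h3 by simp
qed



lemma normal_comp:
  fixes \<phi> :: "real^'n::finite \<Rightarrow> real"
  assumes nd: "has_normal_deriv \<nu> \<phi> x d" and px: "\<phi> x = 0" and G: "(G has_real_derivative G') (at 0)"
  shows "has_normal_deriv \<nu> (\<lambda>z. G (\<phi> z)) x (G' * d)"
proof -
  obtain g where g: "\<And>z. G z - G 0 = g z * (z - 0)" "isCont g 0" "g 0 = G'"
    using G unfolding CARAT_DERIV by blast
  define u where "u t = \<phi> (x - t *\<^sub>R \<nu> x)" for t
  have q: "((\<lambda>t. (\<phi> x - u t) / t) \<longlongrightarrow> d) (at_right 0)"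
    using nd unfolding has_normal_deriv_def u_def .
  have "((\<lambda>t. (- t) * ((\<phi> x - u t) / t)) \<longlongrightarrow> (- 0) * d) (at_right (0::real))"
    by (intro tendsto_mult tendsto_minus q) (simp add: tendsto_ident_at)
  moreover have "eventually (\<lambda>t. (- t) * ((\<phi> x - u t) / t) = u t) (at_right (0::real))"
    using px by (simp add: eventually_at_right_less eventually_mono[OF eventually_at_right_less] ) 
  ultimately have u0: "(u \<longlongrightarrow> 0) (at_right 0)"
    by (simp add: tendsto_cong[symmetric])
  have "((\<lambda>t. g (u t)) \<longlongrightarrow> g 0) (at_right 0)"
    by (rule isCont_tendsto_compose[OF g(2) u0])
  then have lim: "((\<lambda>t. g (u t) * ((\<phi> x - u t) / t)) \<longlongrightarrow> G' * d) (at_right 0)"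
    using g(3) by (intro tendsto_mult q) auto
  have e: "g (u t) * ((\<phi> x - u t) / t) = (G (\<phi> x) - G (u t)) / t" for t
  proof -
    have "g (u t) * (\<phi> x - u t) = G (\<phi> x) - G (u t)" using g(1)[of "u t"] px by (simp add: algebra_simps)
    then show ?thesis by (metis times_divide_eq_right)
  qed
  show ?thesis using lim[unfolded e] unfolding has_normal_deriv_def u_def .
qed



lemma core_ineq:
  fixes \<tau> \<beta> f e S \<eta>0 c e0 :: real
  assumes "0 < \<tau>" "\<tau> < 1" "\<tau> * \<beta> > 1" "f > 0" "e > 0" "e \<le> e0" "e0 \<le> 1"
    "e0 \<le> (\<tau> * \<beta> - 1) * \<eta>0" "e0 * (\<eta>0 + 1) \<le> \<tau> * (1 - \<tau>) * c" "S \<ge> 0" "f < \<eta>0 \<longrightarrow> c \<le> S" "\<eta>0 > 0"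
  shows "(f + e) * (f + e) \<le> \<tau> * (1 - \<tau>) * S + \<tau> * \<beta> * f * (f + e)"
proof -
  define k where "k = \<tau> * \<beta> - 1"
  have k: "k > 0" using assms(3) by (simp add: k_def)
  have A: "f + e > 0" using assms by simp
  have eq: "\<tau> * \<beta> * f * (f + e) = (f + e) * f + k * f * (f + e)" by (simp add: k_def algebra_simps)
  have t1: "\<tau> * (1 - \<tau>) \<ge> 0" using assms by simp
  have ts: "\<tau> * (1 - \<tau>) * S \<ge> 0" using t1 assms(10) by simp
  show ?thesis
  proof (cases "f < \<eta>0")
    case True
    have cS: "\<tau> * (1 - \<tau>) * c \<le> \<tau> * (1 - \<tau>) * S" using True assms(11) t1 by (simp add: mult_left_mono)
    have "e * (f + e) \<le> e0 * (\<eta>0 + 1)"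
      using assms True by (intro mult_mono) auto
    moreover have "k * f * (f + e) \<ge> 0" using k assms A by simp
    ultimately show ?thesis using eq cS assms(9) by (simp add: algebra_simps) 
  next
    case False
    have "e \<le> k * f"
    proof -
      have "k * \<eta>0 \<le> k * f" using False k by (simp add: mult_left_mono)
      then show ?thesis using assms(6,8) unfolding k_def by linarith
    qed
    then have "e * (f + e) \<le> k * f * (f + e)" using A by (simp add: mult_right_mono)
    then show ?thesis using eq ts by (simp add: algebra_simps)
  qed
qed



theorem theorem5p1:
  fixes \<Omega> :: "(real^'n::finite) set" and \<nu> :: "real^'n \<Rightarrow> real^'n"
    and \<phi> :: "real^'n \<Rightarrow> real" and \<beta> \<theta> lam p q \<tau> :: real
  assumes dom: "smooth_domain \<Omega> \<nu>"
    and pq: "0 < q" "q < 1" "1 < p"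
    and beta: "smallest_dirichlet_eigenvalue \<Omega> \<beta>"
    and theta: "0 < \<theta>" "\<theta> < 1"
    and phi_reg: "C2_theta_closure \<theta> \<Omega> \<phi>"
    and phi_eig: "\<forall>x\<in>\<Omega>. - laplacian \<phi> x = \<beta> * \<phi> x"
    and phi_pos: "\<forall>x\<in>\<Omega>. \<phi> x > 0"
    and phi_bdry: "\<forall>x\<in>frontier \<Omega>. \<phi> x = 0"
    and phi_normal: "\<exists>c1 c2. 0 < c1 \<and> c1 \<le> c2 \<and>
        (\<forall>x\<in>frontier \<Omega>. \<exists>d. has_normal_deriv \<nu> \<phi> x d \<and> c1 \<le> - d \<and> - d \<le> c2)"
    and beta_gt: "\<beta> > 1"
    and lam: "lam > 0"
    and tau: "1 / \<beta> < \<tau>" "\<tau> < 1"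
  shows "\<exists>\<epsilon>0>0. \<forall>\<epsilon>. 0 < \<epsilon> \<and> \<epsilon> \<le> \<epsilon>0 \<longrightarrow>
           (\<exists>\<delta>1>0. \<forall>\<delta>. 0 < \<delta> \<and> \<delta> \<le> \<delta>1 \<longrightarrow>
              supersolution \<Omega> \<nu> lam p q (\<lambda>x. \<delta> * (\<phi> x + \<epsilon>) powr \<tau>))"
proof -
  have op: "open \<Omega>" using dom by (simp add: smooth_domain_def)
  have C2: "C2_on \<Omega> \<phi>" and cc: "continuous_on (closure \<Omega>) \<phi>"
    and uc: "\<forall>i. uniformly_continuous_on \<Omega> (partial i \<phi>)"
    using phi_reg unfolding C2_theta_closure_def by auto
  have cphi: "continuous_on \<Omega> \<phi>" and P: "\<forall>i. \<forall>y\<in>\<Omega>. has_partial_at i \<phi> y"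
    and C: "\<forall>i. continuous_on \<Omega> (partial i \<phi>)"
    and PP: "\<forall>i j. \<forall>y\<in>\<Omega>. has_partial_at j (partial i \<phi>) y"
    and CC: "\<forall>i j. continuous_on \<Omega> (partial j (partial i \<phi>))"
    using C2 unfolding C2_on_def by auto
  obtain \<eta>0 c where eta0: "\<eta>0 > 0" and cpos: "c > 0"
    and gl: "\<forall>y\<in>\<Omega>. \<phi> y < \<eta>0 \<longrightarrow> c \<le> (\<Sum>i\<in>UNIV. (partial i \<phi> y)^2)"
    using grad_lower[OF dom P C cc uc phi_pos phi_bdry phi_normal] by blast
  obtain c1 c2 where c1: "0 < c1" "c1 \<le> c2"
    and nb: "\<forall>x\<in>frontier \<Omega>. \<exists>d. has_normal_deriv \<nu> \<phi> x d \<and> c1 \<le> - d \<and> - d \<le> c2"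
    using phi_normal by blast
  have bpos: "\<beta> > 0" using beta_gt by simp
  have tb: "\<tau> * \<beta> > 1" using tau(1) bpos by (simp add: divide_less_eq mult.commute)
  have tpos: "\<tau> > 0" using tau(1) bpos by (smt (verit) divide_pos_pos)
  have phi_nn: "\<forall>x\<in>closure \<Omega>. \<phi> x \<ge> 0"
    using phi_pos phi_bdry closure_Un_frontier by (metis Un_iff less_imp_le order_refl)
  define e0 where "e0 = min 1 (min ((\<tau> * \<beta> - 1) * \<eta>0) (\<tau> * (1 - \<tau>) * c / (\<eta>0 + 1)))"
  have e0pos: "e0 > 0" using tb eta0 cpos tpos tau(2) by (simp add: e0_def)
  have e0le3: "e0 \<le> \<tau> * (1 - \<tau>) * c / (\<eta>0 + 1)" by (simp add: e0_def)
  have e0le: "e0 \<le> 1" "e0 \<le> (\<tau> * \<beta> - 1) * \<eta>0" "e0 * (\<eta>0 + 1) \<le> \<tau> * (1 - \<tau>) * c"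
    using eta0 e0le3 by (auto simp: e0_def pos_le_divide_eq)
  show ?thesis
  proof (rule exI[of _ e0], intro conjI allI impI e0pos)
    fix \<epsilon> :: real assume eps: "0 < \<epsilon> \<and> \<epsilon> \<le> e0"
    define K where "K = lam * \<epsilon> powr (\<tau> * q) / (\<tau> * \<epsilon> powr (\<tau> - 1) * c2)"
    have Kpos: "K > 0" using lam eps tpos c1 by (simp add: K_def)
    define d1 where "d1 = K powr (1 / (1 - q))"
    have d1pos: "d1 > 0" using Kpos by (simp add: d1_def)
    show "\<exists>\<delta>1>0. \<forall>\<delta>. 0 < \<delta> \<and> \<delta> \<le> \<delta>1 \<longrightarrow> supersolution \<Omega> \<nu> lam p q (\<lambda>x. \<delta> * (\<phi> x + \<epsilon>) powr \<tau>)"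
    proof (rule exI[of _ d1], intro conjI allI impI d1pos)
      fix \<delta> :: real assume del: "0 < \<delta> \<and> \<delta> \<le> d1"
      define \<psi> where "\<psi> = (\<lambda>x. \<delta> * (\<phi> x + \<epsilon>) powr \<tau>)"
      have Apos: "\<forall>y\<in>\<Omega>. \<phi> y + \<epsilon> > 0" using phi_pos eps by (simp add: add_pos_pos)
      note PS1 = psi_partials(1)[OF op P PP Apos]
      note PS2 = psi_partials(2)[OF op P PP Apos]
      have C2psi: "C2_on \<Omega> \<psi>"
        unfolding C2_on_def
      proof (intro conjI allI ballI)
        show "continuous_on \<Omega> \<psi>" unfolding \<psi>_def
          using Apos by (intro continuous_intros cphi) auto
        fix i
        show "has_partial_at i \<psi> x" if "x \<in> \<Omega>" for x
          using PS1[OF that] by (simp add: \<psi>_def)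
        show "continuous_on \<Omega> (partial i \<psi>)"
        proof (rule continuous_on_cong[THEN iffD2, OF refl])
          show "\<And>x. x \<in> \<Omega> \<Longrightarrow> partial i \<psi> x = \<delta> * \<tau> * ((\<phi> x + \<epsilon>) powr (\<tau> - 1) * partial i \<phi> x)"
            using PS1 by (simp add: \<psi>_def)
          show "continuous_on \<Omega> (\<lambda>x. \<delta> * \<tau> * ((\<phi> x + \<epsilon>) powr (\<tau> - 1) * partial i \<phi> x))"
            using Apos C by (intro continuous_intros cphi) auto
        qed
        fix j
        show "has_partial_at j (partial i \<psi>) x" if "x \<in> \<Omega>" for x
          using PS2[OF that] by (simp add: \<psi>_def)
        show "continuous_on \<Omega> (partial j (partial i \<psi>))"
        proof (rule continuous_on_cong[THEN iffD2, OF refl])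
          show "\<And>x. x \<in> \<Omega> \<Longrightarrow> partial j (partial i \<psi>) x = \<delta> * \<tau> * ((\<tau> - 1) * (\<phi> x + \<epsilon>) powr (\<tau> - 2) * partial j \<phi> x * partial i \<phi> x
                    + (\<phi> x + \<epsilon>) powr (\<tau> - 1) * partial j (partial i \<phi>) x)"
            using PS2 by (simp add: \<psi>_def)
          show "continuous_on \<Omega> (\<lambda>x. \<delta> * \<tau> * ((\<tau> - 1) * (\<phi> x + \<epsilon>) powr (\<tau> - 2) * partial j \<phi> x * partial i \<phi> x
                    + (\<phi> x + \<epsilon>) powr (\<tau> - 1) * partial j (partial i \<phi>) x))"
            using Apos C CC by (intro continuous_intros cphi) auto
        qed
      qed
      have ccpsi: "continuous_on (closure \<Omega>) \<psi>" unfolding \<psi>_def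
        using phi_nn eps by (intro continuous_intros cc) (auto simp: add_nonneg_pos)
      have interior: "\<psi> y - \<psi> y powr p \<le> - laplacian \<psi> y" if y: "y \<in> \<Omega>" for y
      proof -
        define A where "A = \<phi> y + \<epsilon>"
        define S where "S = (\<Sum>i\<in>UNIV. (partial i \<phi> y)^2)"
        have A: "A > 0" using Apos y by (simp add: A_def)
        have S0: "S \<ge> 0" unfolding S_def by (simp add: sum_nonneg)
        have lapphi: "laplacian \<phi> y = - \<beta> * \<phi> y" using phi_eig y by (metis minus_minus minus_mult_left)
        define k1 where "k1 = \<delta> * \<tau> * (\<tau> - 1) * A powr (\<tau> - 2)"
        define k2 where "k2 = \<delta> * \<tau> * A powr (\<tau> - 1)"
        have "laplacian \<psi> y = (\<Sum>i\<in>UNIV. k1 * (partial i \<phi> y)^2 + k2 * partial i (partial i \<phi>) y)"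
          unfolding laplacian_def
        proof (rule sum.cong[OF refl])
          fix i
          show "partial i (partial i \<psi>) y = k1 * (partial i \<phi> y)^2 + k2 * partial i (partial i \<phi>) y"
            using PS2[OF y, of i i] by (simp add: \<psi>_def A_def k1_def k2_def power2_eq_square algebra_simps)
        qed
        also have "\<dots> = k1 * S + k2 * laplacian \<phi> y"
          by (simp add: sum.distrib sum_distrib_left S_def laplacian_def)
        also have "\<dots> = \<delta> * \<tau> * ((\<tau> - 1) * A powr (\<tau> - 2) * S + A powr (\<tau> - 1) * laplacian \<phi> y)"
          by (simp add: k1_def k2_def algebra_simps)
        finally have lap: "- laplacian \<psi> y = \<delta> * \<tau> * ((1 - \<tau>) * A powr (\<tau> - 2) * S + A powr (\<tau> - 1) * \<beta> * \<phi> y)"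
          using lapphi by (simp add: algebra_simps)
        have p2: "A powr (\<tau> - 2) = A powr \<tau> / (A * A)" using A by (simp add: powr_diff power2_eq_square)
        have p1: "A powr (\<tau> - 1) = A powr \<tau> / A" using A by (simp add: powr_diff)
        have core: "A * A \<le> \<tau> * (1 - \<tau>) * S + \<tau> * \<beta> * \<phi> y * A"
          unfolding A_def
          by (rule core_ineq[OF tpos tau(2) tb _ _ _ e0le(1) e0le(2) e0le(3) S0])
             (use phi_pos y eps gl eta0 in \<open>auto simp: S_def\<close>)
        have "- laplacian \<psi> y = \<delta> * A powr \<tau> * ((\<tau> * (1 - \<tau>) * S + \<tau> * \<beta> * \<phi> y * A) / (A * A))"
          using A unfolding lap p1 p2 by (simp add: field_simps)
        moreover have "(\<tau> * (1 - \<tau>) * S + \<tau> * \<beta> * \<phi> y * A) / (A * A) \<ge> 1"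
          using core A by simp
        moreover have "\<delta> * A powr \<tau> > 0" using del A by simp
        ultimately have "- laplacian \<psi> y \<ge> \<delta> * A powr \<tau>"
          by (metis mult.right_neutral mult_left_mono less_imp_le)
        moreover have "\<psi> y = \<delta> * A powr \<tau>" by (simp add: \<psi>_def A_def)
        moreover have "\<psi> y powr p \<ge> 0" by simp
        ultimately show ?thesis by linarith
      qed
      have boundary: "\<exists>d. has_normal_deriv \<nu> \<psi> x d \<and> d \<ge> - lam * \<psi> x powr q"
        if x: "x \<in> frontier \<Omega>" for x
      proof -
        obtain d where nd: "has_normal_deriv \<nu> \<phi> x d" and dle: "- d \<le> c2"
          using nb x by blast
        have px: "\<phi> x = 0" using phi_bdry x by blast
        have G: "((\<lambda>s. \<delta> * (s + \<epsilon>) powr \<tau>) has_real_derivative \<delta> * (\<tau> * (0 + \<epsilon>) powr (\<tau> - 1))) (at 0)"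
          using eps by (intro DERIV_cmult deriv_shift_powr) simp
        have ndpsi: "has_normal_deriv \<nu> \<psi> x (\<delta> * (\<tau> * \<epsilon> powr (\<tau> - 1)) * d)"
          using normal_comp[OF nd px G] by (simp add: \<psi>_def)
        have psix: "\<psi> x = \<delta> * \<epsilon> powr \<tau>" using px by (simp add: \<psi>_def)
        define B where "B = \<tau> * \<epsilon> powr (\<tau> - 1) * c2"
        have Bpos: "B > 0" using tpos eps c1 by (simp add: B_def)
        have "\<delta> powr (1 - q) \<le> d1 powr (1 - q)" using del pq by (intro powr_mono2) auto
        also have "\<dots> = K" using Kpos pq by (simp add: d1_def powr_powr)
        finally have dq: "\<delta> powr (1 - q) * B \<le> lam * \<epsilon> powr (\<tau> * q)"
          using Bpos by (simp add: K_def B_def pos_le_divide_eq mult.commute mult.left_commute)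
        have dd: "\<delta> = \<delta> powr q * \<delta> powr (1 - q)" using del by (simp add: powr_add[symmetric])
        have "\<delta> * B \<le> \<delta> powr q * (lam * \<epsilon> powr (\<tau> * q))"
          using dq del by (subst dd) (simp add: mult.assoc mult_left_mono)
        moreover have "\<psi> x powr q = \<delta> powr q * \<epsilon> powr (\<tau> * q)"
          using del eps by (simp add: psix powr_mult powr_powr)
        moreover have "\<delta> * (\<tau> * \<epsilon> powr (\<tau> - 1)) * d \<ge> - (\<delta> * B)"
        proof -
          have "\<delta> * (\<tau> * \<epsilon> powr (\<tau> - 1)) \<ge> 0" using del tpos by simp
          then have "\<delta> * (\<tau> * \<epsilon> powr (\<tau> - 1)) * (- d) \<le> \<delta> * (\<tau> * \<epsilon> powr (\<tau> - 1)) * c2"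
            using mult_left_mono[OF dle] by simp
          then show ?thesis by (simp add: B_def mult_ac)
        qed
        ultimately have "\<delta> * (\<tau> * \<epsilon> powr (\<tau> - 1)) * d \<ge> - lam * \<psi> x powr q"
          by (simp add: mult_ac)
        then show ?thesis using ndpsi by blast
      qed
      have "supersolution \<Omega> \<nu> lam p q \<psi>"
        unfolding supersolution_def using C2psi ccpsi interior boundary by blast
      then show "supersolution \<Omega> \<nu> lam p q (\<lambda>x. \<delta> * (\<phi> x + \<epsilon>) powr \<tau>)"
        by (simp add: \<psi>_def)
    qed
  qed
qed


end
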